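(* If a fixed point of the function $\mathbf{h}$ exists, it is unique.
   Context: Let $\mathbf{A}\in\mathbb{R}^{n\times n}$ be partitioned into square $b\times b$ blocks, and $S_B$ a set of block indices containing all diagonal blocks. The unknowns (entries of the block ILU factors $\mathbf{L}_{ij}$, $i>j$, and $\mathbf{U}_{ij}$, $i\le j$, for $(i,j)\in S_B$) form $\mathbf{x}\in\mathbb{R}^m$, $m=|S_B|b^2$, with $\mathbf{X}_{ij}$ the $b\times b$ block for index $(i,j)$. The map $\mathbf{h}:D_B\to\mathbb{R}^m$ is given blockwise by $\mathbf{H}_{ij}(\mathbf{x})=(\mathbf{A}_{ij}-\sum_{k=1}^{j-1}\mathbf{X}_{ik}\mathbf{X}_{kj})\mathbf{X}_{jj}^{-1}$ for $i>j$ and $\mathbf{H}_{ij}(\mathbf{x})=\mathbf{A}_{ij}-\sum_{k=1}^{i-1}\mathbf{X}_{ik}\mathbf{X}_{kj}$ for $i\le j$, on $D_B:=\{\mathbf{x}: \mathbf{X}_{jj}\text{ nonsingular for all diagonal blocks}\}$. *)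

theory Defs
  imports "HOL-Analysis.Analysis"
begin

text \<open>Block ILU setting.
  Block indices are 1..N. A block-vector of unknowns x is given by its blocks
  X i j for (i,j) in the sparsity pattern S (values outside S are irrelevant).
  In the sums, only products X_ik X_kj with both indices in S occur
  (entries outside the pattern are zero in the incomplete factors).\<close>

definition blk_sum ::
  "(nat \<times> nat) set \<Rightarrow> (nat \<Rightarrow> nat \<Rightarrow> real^'b^'b) \<Rightarrow> nat \<Rightarrow> nat \<Rightarrow> nat \<Rightarrow> real^'b^'b"
  where "blk_sum S X i j r =
    (\<Sum>k\<in>{1..<r}. if (i,k) \<in> S \<and> (k,j) \<in> S then X i k ** X k j else 0)"

definition blk_h ::
  "(nat \<Rightarrow> nat \<Rightarrow> real^'b^'b) \<Rightarrow> (nat \<times> nat) set \<Rightarrow> (nat \<Rightarrow> nat \<Rightarrow> real^'b^'b)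
    \<Rightarrow> nat \<Rightarrow> nat \<Rightarrow> real^'b^'b"
  where "blk_h A S X i j =
    (if i > j then (A i j - blk_sum S X i j j) ** matrix_inv (X j j)
     else A i j - blk_sum S X i j i)"

definition in_DB :: "nat \<Rightarrow> (nat \<Rightarrow> nat \<Rightarrow> real^'b^'b) \<Rightarrow> bool"
  where "in_DB N X = (\<forall>j\<in>{1..N}. invertible (X j j))"

definition is_fixed_point ::
  "(nat \<Rightarrow> nat \<Rightarrow> real^'b^'b) \<Rightarrow> (nat \<times> nat) set \<Rightarrow> (nat \<Rightarrow> nat \<Rightarrow> real^'b^'b) \<Rightarrow> bool"
  where "is_fixed_point A S X = (\<forall>(i,j)\<in>S. blk_h A S X i j = X i j)"

end

theory Submission
  imports Defs
begin

theorem theorem7: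
  fixes A X Y :: "nat \<Rightarrow> nat \<Rightarrow> real^'b^'b" and N :: nat and S :: "(nat \<times> nat) set"
  assumes "S \<subseteq> {1..N} \<times> {1..N}"
    and "\<forall>j\<in>{1..N}. (j,j) \<in> S"
    and "in_DB N X" and "is_fixed_point A S X"
    and "in_DB N Y" and "is_fixed_point A S Y"
  shows "\<forall>(i,j)\<in>S. X i j = Y i j"
proof -
  define m where "m = (\<lambda>i j::nat. 2 * min i j + (if j < i then 1 else 0))"
  have fX: "\<And>i j. (i,j) \<in> S \<Longrightarrow> blk_h A S X i j = X i j"
    using assms(4) unfolding is_fixed_point_def by auto
  have fY: "\<And>i j. (i,j) \<in> S \<Longrightarrow> blk_h A S Y i j = Y i j"
    using assms(6) unfolding is_fixed_point_def by auto
  have main: "\<forall>i j. (i,j) \<in> S \<longrightarrow> m i j = n \<longrightarrow> X i j = Y i j" for n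
  proof (induction n rule: less_induct)
    case (less n)
    show ?case
    proof (intro allI impI)
      fix i j assume ij: "(i,j) \<in> S" and mn: "m i j = n"
      have IH: "\<And>a b. (a,b) \<in> S \<Longrightarrow> m a b < m i j \<Longrightarrow> X a b = Y a b"
        using less mn by blast
      have sums: "blk_sum S X i j r = blk_sum S Y i j r" if r: "r \<le> min i j" for r
        unfolding blk_sum_def
      proof (rule sum.cong[OF refl])
        fix k assume k: "k \<in> {1..<r}"
        show "(if (i,k) \<in> S \<and> (k,j) \<in> S then X i k ** X k j else 0) =
              (if (i,k) \<in> S \<and> (k,j) \<in> S then Y i k ** Y k j else 0)"
        proof (cases "(i,k) \<in> S \<and> (k,j) \<in> S")
          case True
          have "m i k < m i j" "m k j < m i j" using k r unfolding m_def by auto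
          then show ?thesis using True IH by simp
        next
          case False
          then show ?thesis by (simp only: if_False)
        qed
      qed
      show "X i j = Y i j"
      proof (cases "j < i")
        case True
        have jN: "j \<in> {1..N}" using ij assms(1) by auto
        have jj: "(j,j) \<in> S" using assms(2) jN by auto
        have "m j j < m i j" using True unfolding m_def by auto
        then have "X j j = Y j j" using IH jj by blast
        moreover have "blk_sum S X i j j = blk_sum S Y i j j" using sums True by simp
        ultimately show ?thesis using fX[OF ij] fY[OF ij] True unfolding blk_h_def by simp
      next
        case False
        have "blk_sum S X i j i = blk_sum S Y i j i" using sums False by simp
        then show ?thesis using fX[OF ij] fY[OF ij] False unfolding blk_h_def by simp
      qed
    qed
  qed
  show ?thesis using main by blast
qed

end
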